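(* Let $n=3^27^2=441$ and let $\mathcal{D}_{S_1},\mathcal{D}_{S_2}\subseteq\mathcal{D}_{[441]}\setminus\{441\}$ be such that $\mathcal{D}_{S_1}\setminus\mathcal{D}_{S_2}=\{3\}$, $\mathcal{D}_{S_2}\setminus\mathcal{D}_{S_1}=\{9,7,49\}$, and $1\in\mathcal{D}_{S_1}\cap\mathcal{D}_{S_2}$. Then $\mathrm{Spec}(\mathrm{ICG}(441,\mathcal{D}_{S_1}))\neq\mathrm{Spec}(\mathrm{ICG}(441,\mathcal{D}_{S_2}))$.
   Context: Identify $\mathbb{Z}_n$ with $[n]=\{1,\dots,n\}$. For a divisor $d$ of $n$, $G_n(d)=\{j\in[n]:\gcd(j,n)=d\}$; $\mathcal{D}_{[n]}$ is the set of positive divisors of $n$. For $\mathcal{D}\subseteq\mathcal{D}_{[n]}\setminus\{n\}$, $\mathrm{ICG}(n,\mathcal{D})=\mathrm{Cay}(\mathbb{Z}_n,S)$ with $S=\bigcup_{d\in\mathcal{D}}G_n(d)$, and $\mathcal{D}=\mathcal{D}_S$. $\mathrm{Spec}$ is the multiset of adjacency eigenvalues. *)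

theory Defs
  imports "Jordan_Normal_Form.Char_Poly" "HOL-Computational_Algebra.Fundamental_Theorem_Algebra"
begin

text \<open>Z_n is identified with [n] = {1..n}; the residue 0 is represented by n.\<close>

definition divisors_of :: "nat \<Rightarrow> nat set" where
  "divisors_of n = {d. 0 < d \<and> d dvd n}"

definition G :: "nat \<Rightarrow> nat \<Rightarrow> nat set" where
  "G n d = {j \<in> {1..n}. gcd j n = d}"

definition ICG_S :: "nat \<Rightarrow> nat set \<Rightarrow> nat set" where
  "ICG_S n D = (\<Union>d\<in>D. G n d)"

definition rep :: "nat \<Rightarrow> int \<Rightarrow> nat" where
  "rep n k = (if k mod int n = 0 then n else nat (k mod int n))"

text \<open>Adjacency matrix of Cay(Z_n, S); row/column index i < n stands for the element i+1 of [n].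
  x ~ y iff y - x \<in> S (mod n).\<close>
definition cay_adj :: "nat \<Rightarrow> nat set \<Rightarrow> complex mat" where
  "cay_adj n S = mat n n (\<lambda>(i, j). if rep n (int j - int i) \<in> S then 1 else 0)"

definition ICG_adj :: "nat \<Rightarrow> nat set \<Rightarrow> complex mat" where
  "ICG_adj n D = cay_adj n (ICG_S n D)"

definition Spec :: "complex mat \<Rightarrow> complex multiset" where
  "Spec A = proots (char_poly A)"

end

theory Submission
  imports Defs "Jordan_Normal_Form.Schur_Decomposition" "HOL-Number_Theory.Number_Theory"
begin


lemma trace_comm:
  fixes A B :: "'a::comm_ring_1 mat"
  assumes "A \<in> carrier_mat n n" "B \<in> carrier_mat n n"
  shows "(\<Sum>i<n. (A*B)$$(i,i)) = (\<Sum>i<n. (B*A)$$(i,i))"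
proof -
  have "(\<Sum>i<n. (A*B)$$(i,i)) = (\<Sum>i<n. \<Sum>k<n. A$$(i,k) * B$$(k,i))"
    using assms by (auto simp: scalar_prod_def lessThan_atLeast0 intro!: sum.cong)
  also have "\<dots> = (\<Sum>k<n. \<Sum>i<n. B$$(k,i) * A$$(i,k))"
    by (subst sum.swap) (simp add: mult.commute)
  also have "\<dots> = (\<Sum>i<n. (B*A)$$(i,i))"
    using assms by (auto simp: scalar_prod_def lessThan_atLeast0 intro!: sum.cong)
  finally show ?thesis .
qed

lemma ut_mult:
  fixes A B :: "'a::comm_ring_1 mat"
  assumes A: "A \<in> carrier_mat n n" and B: "B \<in> carrier_mat n n"
    and uA: "upper_triangular A" and uB: "upper_triangular B"
  shows "upper_triangular (A*B)" "\<And>i. i < n \<Longrightarrow> (A*B)$$(i,i) = A$$(i,i) * B$$(i,i)"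
proof -
  show "upper_triangular (A*B)"
  proof (rule upper_triangularI)
    fix i j assume ji: "j < i" and i: "i < dim_row (A*B)"
    hence "(A*B)$$(i,j) = (\<Sum>k\<in>{0..<n}. A$$(i,k) * B$$(k,j))"
      using A B by (auto simp: scalar_prod_def)
    also have "\<dots> = 0"
    proof (rule sum.neutral, intro ballI)
      fix k assume k: "k \<in> {0..<n}"
      show "A$$(i,k) * B$$(k,j) = 0"
      proof (cases "k < i")
        case True thus ?thesis using uA A i by (auto dest: upper_triangularD)
      next
        case False thus ?thesis using upper_triangularD[OF uB, of j k] B k ji by auto
      qed
    qed
    finally show "(A*B)$$(i,j) = 0" .
  qed
  fix i assume i: "i < n"
  hence "(A*B)$$(i,i) = (\<Sum>k\<in>{0..<n}. A$$(i,k) * B$$(k,i))"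
    using A B by (auto simp: scalar_prod_def)
  also have "\<dots> = A$$(i,i) * B$$(i,i) + (\<Sum>k\<in>{0..<n}-{i}. A$$(i,k) * B$$(k,i))"
    by (rule sum.remove) (use i in auto)
  also have "(\<Sum>k\<in>{0..<n}-{i}. A$$(i,k) * B$$(k,i)) = 0"
  proof (rule sum.neutral, intro ballI)
    fix k assume k: "k \<in> {0..<n}-{i}"
    show "A$$(i,k) * B$$(k,i) = 0"
    proof (cases "k < i")
      case True thus ?thesis using uA A i by (auto dest: upper_triangularD)
    next
      case False thus ?thesis using upper_triangularD[OF uB, of i k] B k by auto
    qed
  qed
  finally show "(A*B)$$(i,i) = A$$(i,i) * B$$(i,i)" by simp
qed

lemma proots_lin: "proots (\<Prod>a\<leftarrow>as. [:- a, 1::'a::idom:]) = mset as"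
proof (induction as)
  case (Cons a as)
  have "(\<Prod>a\<leftarrow>as. [:- a, 1::'a:]) \<noteq> 0" by (auto simp: prod_list_zero_iff)
  moreover have "[:- a, 1::'a:] \<noteq> 0" by simp
  ultimately have "proots ([:- a, 1::'a:] * (\<Prod>a\<leftarrow>as. [:- a, 1::'a:])) = proots [:- a, 1::'a:] + mset as"
    using Cons.IH by (subst proots_mult) auto
  moreover have "proots [:- a, 1::'a:] = {#a#}" using proots_linear_factor[of "-a"] by simp
  ultimately show ?case by simp
qed simp

lemma tr3_spec:
  fixes A :: "complex mat"
  assumes A: "A \<in> carrier_mat n n"
  shows "(\<Sum>i<n. (A*A*A)$$(i,i)) = (\<Sum>a\<in>#Spec A. a^3)"
proof -
  obtain as where cA: "char_poly A = (\<Prod>a\<leftarrow>as. [:- a, 1:])"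
    using char_poly_factorized[OF A] by auto
  have sp: "Spec A = mset as"
    unfolding Spec_def cA by (rule proots_lin)
  obtain B P Q where sd: "schur_decomposition A as = (B,P,Q)" by (cases "schur_decomposition A as") auto
  from schur_decomposition[OF A cA sd] have w: "similar_mat_wit A B P Q"
    and ut: "upper_triangular B" and dg: "diag_mat B = as" by auto
  from w A have BPQ: "B \<in> carrier_mat n n" "P \<in> carrier_mat n n" "Q \<in> carrier_mat n n"
    and QP: "Q * P = 1\<^sub>m n" and PQ: "P * Q = 1\<^sub>m n" and AE: "A = P * B * Q"
    by (auto simp: similar_mat_wit_def Let_def)
  have p3: "M ^\<^sub>m 3 = M*M*M" if "M \<in> carrier_mat n n" for M :: "complex mat"
    using that by (simp add: numeral_3_eq_3)
  have AE3: "A*A*A = P * (B*B*B) * Q"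
    using similar_mat_wit_pow_id[OF w, of 3] p3[OF A] p3[OF BPQ(1)] by simp
  have B3: "B*B*B \<in> carrier_mat n n" using BPQ by auto
  have "(\<Sum>i<n. (A*A*A)$$(i,i)) = (\<Sum>i<n. ((P * (B*B*B)) * Q)$$(i,i))" by (simp add: AE3)
  also have "\<dots> = (\<Sum>i<n. (Q * (P * (B*B*B)))$$(i,i))"
    by (rule trace_comm) (use BPQ B3 in auto)
  also have "Q * (P * (B*B*B)) = (Q * P) * (B*B*B)"
    by (rule assoc_mult_mat[symmetric, of Q n n P n "B*B*B" n]) (use BPQ B3 in auto)
  also have "\<dots> = B*B*B" by (simp only: QP) (rule left_mult_one_mat[OF B3])
  also have "(\<Sum>i<n. (B*B*B)$$(i,i)) = (\<Sum>i<n. (B$$(i,i))^3)"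
  proof (rule sum.cong[OF refl])
    fix i assume i: "i \<in> {..<n}"
    have u2: "upper_triangular (B*B)" using ut_mult(1)[OF BPQ(1) BPQ(1) ut ut] .
    have "(B*B*B)$$(i,i) = (B*B)$$(i,i) * B$$(i,i)"
      using ut_mult(2)[of "B*B" n B, OF _ BPQ(1) u2 ut] BPQ i by auto
    also have "\<dots> = (B$$(i,i))^3" using ut_mult(2)[OF BPQ(1) BPQ(1) ut ut] i
      by (simp add: power3_eq_cube)
    finally show "(B*B*B)$$(i,i) = (B$$(i,i))^3" .
  qed
  also have "\<dots> = (\<Sum>a\<leftarrow>as. a^3)"
    using dg BPQ(1) unfolding diag_mat_def
    by (auto simp: sum_list_map_eq_sum_count2 sum_list_sum_nth atLeast0LessThan) 
  also have "\<dots> = (\<Sum>a\<in>#Spec A. a^3)" by (metis sp mset_map sum_mset_sum_list)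
  finally show ?thesis .
qed


lemma shift_sum:
  fixes g :: "int \<Rightarrow> 'a::comm_monoid_add"
  assumes n: "n > 0" and per: "\<And>k. g (k mod int n) = g k"
  shows "(\<Sum>j<n. g (int j + c)) = (\<Sum>x<n. g (int x))"
proof -
  define h where "h j = nat ((int j + c) mod int n)" for j
  have hl: "h j < n" for j using n unfolding h_def
    by (simp add: nat_less_iff)
  have inj: "inj_on h {..<n}"
  proof
    fix j j' assume j: "j \<in> {..<n}" and j': "j' \<in> {..<n}" and e: "h j = h j'"
    hence "(int j + c) mod int n = (int j' + c) mod int n" using n unfolding h_def
      by (simp add: nat_eq_iff)
    hence "int j mod int n = int j' mod int n" using cong_add_rcancel[of "int j" c "int j'" "int n"] unfolding cong_def by simp
    thus "j = j'" using j j' by simp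
  qed
  have im: "h ` {..<n} = {..<n}"
    by (rule endo_inj_surj) (use inj hl in auto)
  have "(\<Sum>j<n. g (int j + c)) = (\<Sum>j<n. g (int (h j)))"
    by (rule sum.cong[OF refl]) (use n per in \<open>simp add: h_def\<close>)
  also have "\<dots> = (\<Sum>x\<in>h ` {..<n}. g (int x))"
    by (simp add: sum.reindex[OF inj])
  also have "\<dots> = (\<Sum>x<n. g (int x))" by (simp only: im)
  finally show ?thesis .
qed

definition fD :: "nat set \<Rightarrow> int \<Rightarrow> nat" where
  "fD D k = (if nat (gcd k 441) \<in> D then 1 else 0)"

lemma fD_per: "fD D (k mod 441) = fD D k"
  unfolding fD_def by (simp add: gcd_mod_left)

lemma rep_in_S:
  assumes D: "D \<subseteq> divisors_of 441 - {441}"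
  shows "(rep 441 k \<in> ICG_S 441 D) \<longleftrightarrow> nat (gcd k 441) \<in> D"
proof (cases "k mod 441 = 0")
  case True
  hence "gcd k 441 = 441" by (metis gcd_mod_left gcd_0_left zero_neq_numeral abs_numeral normalize_int_def)
  thus ?thesis using True D unfolding rep_def ICG_S_def G_def by auto
next
  case False
  have r: "rep 441 k = nat (k mod 441)" using False by (simp add: rep_def)
  have pos: "k mod 441 > 0" using False by (metis pos_mod_sign zero_less_numeral order_le_less)
  have "gcd (nat (k mod 441)) 441 = nat (gcd k 441)"
  proof -
    have "int (gcd (nat (k mod 441)) 441) = gcd (k mod 441) 441"
      using pos by (simp add: gcd_int_def)
    also have "\<dots> = gcd k 441" by (simp add: gcd_mod_left)
    finally show ?thesis by linarith
  qed
  moreover have "nat (k mod 441) \<in> {1..441}"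
  proof -
    have "k mod 441 < 441" by simp
    hence "nat (k mod 441) < 441" by (simp add: nat_less_iff)
    moreover have "nat (k mod 441) > 0" using pos by simp
    ultimately show ?thesis by simp
  qed
  ultimately show ?thesis using r D unfolding ICG_S_def G_def by auto
qed

definition TT :: "nat set \<Rightarrow> nat" where
  "TT D = (\<Sum>x<441. \<Sum>y<441. fD D (int x) * fD D (int y) * fD D (- int x - int y))"

lemma fD_per2: "fD D (a - k mod 441) = fD D (a - k)"
proof -
  have "fD D (a - k mod 441) = fD D ((a - k mod 441) mod 441)" by (simp add: fD_per)
  also have "(a - k mod 441) mod 441 = (a - k) mod 441" by (simp add: mod_diff_right_eq)
  also have "fD D \<dots> = fD D (a - k)" by (simp add: fD_per)
  finally show ?thesis .
qed

lemma triple_sum: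
  "(\<Sum>i<441. \<Sum>l<441. \<Sum>j<441. fD D (int j - int i) * fD D (int l - int j) * fD D (int i - int l))
   = 441 * TT D"
proof -
  let ?f = "fD D"
  define S where "S z = (\<Sum>y<441. ?f (int y) * ?f (z - int y))" for z
  have S_per: "S (- (t mod 441)) = S (- t)" for t
  proof -
    have "?f (- (t mod 441) - int y) = ?f (- t - int y)" for y
    proof -
      have "?f (- (t mod 441) - int y) = ?f ((- (t mod 441) - int y) mod 441)" by (simp add: fD_per)
      also have "(- (t mod 441) - int y) mod 441 = (- t - int y) mod 441"
        by (metis mod_diff_left_eq mod_minus_eq)
      finally show ?thesis by (simp add: fD_per)
    qed
    thus ?thesis unfolding S_def by simp
  qed
  have inner: "(\<Sum>l<441. ?f (int l - int j) * ?f (int i - int l)) = S (int i - int j)" for i j :: nat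
  proof -
    have "(\<Sum>l<441. ?f (int l - int j) * ?f (int i - int l))
        = (\<Sum>l<441::nat. (\<lambda>t. ?f t * ?f (int i - int j - t)) (int l + (- int j)))"
      by (rule sum.cong) (simp_all add: algebra_simps)
    also have "\<dots> = (\<Sum>y<441::nat. (\<lambda>t. ?f t * ?f (int i - int j - t)) (int y))"
      by (rule shift_sum) (simp_all add: fD_per fD_per2)
    finally show ?thesis unfolding S_def by simp
  qed
  have outer: "(\<Sum>j<441. ?f (int j - int i) * S (int i - int j)) = (\<Sum>x<441. ?f (int x) * S (- int x))" for i :: nat
  proof -
    have "(\<Sum>j<441. ?f (int j - int i) * S (int i - int j))
        = (\<Sum>j<441::nat. (\<lambda>t. ?f t * S (- t)) (int j + (- int i)))"
      by (rule sum.cong) (simp_all add: algebra_simps)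
    also have "\<dots> = (\<Sum>x<441::nat. (\<lambda>t. ?f t * S (- t)) (int x))"
      by (rule shift_sum) (simp_all add: fD_per S_per)
    finally show ?thesis by simp
  qed
  have T: "(\<Sum>x<441. ?f (int x) * S (- int x)) = TT D"
    unfolding TT_def S_def by (simp add: sum_distrib_left mult.assoc)
  have "(\<Sum>i<441. \<Sum>l<441. \<Sum>j<441. ?f (int j - int i) * ?f (int l - int j) * ?f (int i - int l))
      = (\<Sum>i<441::nat. \<Sum>j<441. ?f (int j - int i) * (\<Sum>l<441. ?f (int l - int j) * ?f (int i - int l)))"
    by (rule sum.cong[OF refl], subst sum.swap) (simp add: sum_distrib_left mult.assoc)
  also have "\<dots> = (\<Sum>i<441::nat. TT D)" by (simp add: inner outer T)
  finally show ?thesis by simp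
qed

lemma tr3_ICG:
  assumes D: "D \<subseteq> divisors_of 441 - {441}"
  defines "M \<equiv> ICG_adj 441 D"
  shows "(\<Sum>i<441. (M*M*M)$$(i,i)) = of_nat (441 * TT D)"
proof -
  have M: "M \<in> carrier_mat 441 441" unfolding M_def ICG_adj_def cay_adj_def by simp
  have Mij: "M$$(i,j) = of_nat (fD D (int j - int i))" if "i < 441" "j < 441" for i j
    using that rep_in_S[OF D] unfolding M_def ICG_adj_def cay_adj_def fD_def by auto
  have "(M*M*M)$$(i,i) = of_nat (\<Sum>l<441. \<Sum>j<441. fD D (int j - int i) * fD D (int l - int j) * fD D (int i - int l))"
    if i: "i < 441" for i
  proof -
    have "(M*M*M)$$(i,i) = (\<Sum>j<441. M$$(i,j) * (\<Sum>l<441. M$$(j,l) * M$$(l,i)))"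
      using M i by (auto simp: scalar_prod_def lessThan_atLeast0 intro!: sum.cong)
    also have "\<dots> = (\<Sum>j<441. \<Sum>l<441. of_nat (fD D (int j - int i) * fD D (int l - int j) * fD D (int i - int l)))"
      using i by (auto simp: Mij sum_distrib_left mult.assoc intro!: sum.cong)
    also have "\<dots> = (\<Sum>l<441. \<Sum>j<441. of_nat (fD D (int j - int i) * fD D (int l - int j) * fD D (int i - int l)))"
      by (rule sum.swap)
    finally show ?thesis by simp
  qed
  hence "(\<Sum>i<441. (M*M*M)$$(i,i)) = of_nat (\<Sum>i<441. \<Sum>l<441. \<Sum>j<441. fD D (int j - int i) * fD D (int l - int j) * fD D (int i - int l))"
    by simp
  also have "\<dots> = of_nat (441 * TT D)" by (simp only: triple_sum)
  finally show ?thesis .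
qed




definition cp3 :: "int \<Rightarrow> int" where
  "cp3 k = (if k mod 9 = 0 then 9 else if k mod 3 = 0 then 3 else 1)"

definition cp7 :: "int \<Rightarrow> int" where
  "cp7 k = (if k mod 49 = 0 then 49 else if k mod 7 = 0 then 7 else 1)"


lemma cp3_mod: "cp3 (k mod 9) = cp3 k"
  unfolding cp3_def by (simp add: mod_mod_cancel)

lemma cp7_mod: "cp7 (k mod 49) = cp7 k"
  unfolding cp7_def by (simp add: mod_mod_cancel)


lemma gcd9_tab: "list_all (\<lambda>r. gcd (int r) 9 = cp3 (int r)) [0..<9]"
  by code_simp

lemma gcd49_tab: "list_all (\<lambda>r. gcd (int r) 49 = cp7 (int r)) [0..<49]"
  by code_simp


lemma gcd9: "gcd k 9 = cp3 k"
proof -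
  define r where "r = nat (k mod 9)"
  have r: "r \<in> set [0..<9]" unfolding r_def by (simp add: nat_less_iff)
  have rk: "int r = k mod 9" unfolding r_def by simp
  have "gcd k 9 = gcd (int r) 9" by (simp add: rk gcd_mod_left)
  also have "\<dots> = cp3 (int r)" using gcd9_tab r by (simp add: list_all_iff)
  also have "\<dots> = cp3 k" by (simp add: rk cp3_mod)
  finally show ?thesis .
qed


lemma gcd49: "gcd k 49 = cp7 k"
proof -
  define r where "r = nat (k mod 49)"
  have r: "r \<in> set [0..<49]" unfolding r_def by (simp add: nat_less_iff)
  have rk: "int r = k mod 49" unfolding r_def by simp
  have "gcd k 49 = gcd (int r) 49" by (simp add: rk gcd_mod_left)
  also have "\<dots> = cp7 (int r)" using gcd49_tab r by (simp add: list_all_iff)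
  also have "\<dots> = cp7 k" by (simp add: rk cp7_mod)
  finally show ?thesis .
qed


lemma gcd_mult_coprime:
  fixes k a b :: int
  assumes "coprime a b"
  shows "gcd k (a*b) = gcd k a * gcd k b"
proof (rule zdvd_antisym_nonneg)
  show "0 \<le> gcd k (a*b)" "0 \<le> gcd k a * gcd k b" by simp_all
  have c: "coprime (gcd k a) (gcd k b)"
    using assms by (rule coprime_imp_coprime) (auto intro: dvd_trans)
  have "gcd k a * gcd k b dvd k" by (rule divides_mult[OF _ _ c]) simp_all
  moreover have "gcd k a * gcd k b dvd a * b" by (rule mult_dvd_mono) simp_all
  ultimately show "gcd k a * gcd k b dvd gcd k (a*b)" by (rule gcd_greatest)
  obtain a' b' where ab: "gcd k (a*b) = a' * b'" "a' dvd a" "b' dvd b"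
    using division_decomp[of "gcd k (a*b)" a b] by auto
  have "a' dvd k" using ab(1) by (metis dvd_mult2 gcd_dvd1 dvd_trans dvd_triv_left)
  hence "a' dvd gcd k a" using ab(2) by simp
  moreover have "b' dvd k" using ab(1) by (metis gcd_dvd1 dvd_trans dvd_triv_right)
  hence "b' dvd gcd k b" using ab(3) by simp
  ultimately show "gcd k (a*b) dvd gcd k a * gcd k b" using ab(1) by (simp add: mult_dvd_mono)
qed


lemma gcd441: "gcd k 441 = cp3 k * cp7 k"
proof -
  have "coprime (9::int) 49" by code_simp
  hence "gcd k (9*49) = gcd k 9 * gcd k 49" by (rule gcd_mult_coprime)
  thus ?thesis by (simp add: gcd9 gcd49)
qed


definition Dv :: "nat set" where "Dv = {1,3,7,9,21,49,63,147}"


definition E :: "nat \<Rightarrow> int \<Rightarrow> nat" where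
  "E d k = (if cp3 k = cp3 (int d) \<and> cp7 k = cp7 (int d) then 1 else 0)"


lemma cp_tab: "cp3 1 = 1" "cp3 3 = 3" "cp3 7 = 1" "cp3 9 = 9" "cp3 21 = 3" "cp3 49 = 1" "cp3 63 = 9" "cp3 147 = 3"
  "cp7 1 = 1" "cp7 3 = 1" "cp7 7 = 7" "cp7 9 = 1" "cp7 21 = 7" "cp7 49 = 49" "cp7 63 = 7" "cp7 147 = 49"
  by (simp_all add: cp3_def cp7_def)


lemma key_Dv:
  assumes "u \<in> {1,3,9}" "v \<in> {1,7,49}" "d \<in> Dv"
  shows "(u = cp3 (int d) \<and> v = cp7 (int d)) \<longleftrightarrow> d = nat (u*v)"
  using assms unfolding Dv_def by (elim insertE emptyE; simp add: cp_tab)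


lemma fD_E:
  assumes D: "D \<subseteq> Dv"
  shows "fD D k = (\<Sum>d\<in>D. E d k)"
proof -
  have u: "cp3 k \<in> {1,3,9}" and v: "cp7 k \<in> {1,7,49}" unfolding cp3_def cp7_def by auto
  have fin: "finite D" using D finite_subset unfolding Dv_def by auto
  have "(\<Sum>d\<in>D. E d k) = (\<Sum>d\<in>D. if nat (cp3 k * cp7 k) = d then 1 else 0)"
  proof (rule sum.cong[OF refl])
    fix d assume "d \<in> D"
    hence "d \<in> Dv" using D by auto
    from key_Dv[OF u v this] show "E d k = (if nat (cp3 k * cp7 k) = d then 1 else 0)"
      unfolding E_def by (simp only: eq_commute[of "nat _" d])
  qed
  also have "\<dots> = (if nat (cp3 k * cp7 k) \<in> D then 1 else 0)"
    using fin by (simp add: sum.delta)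
  finally show ?thesis unfolding fD_def gcd441 by simp
qed


lemma crt1:
  fixes H :: "nat \<Rightarrow> nat \<Rightarrow> 'a::comm_monoid_add"
  shows "(\<Sum>x<441. H (x mod 9) (x mod 49)) = (\<Sum>a<9. \<Sum>b<49. H a b)"
proof -
  define \<phi> where "\<phi> x = (x mod 9, x mod 49)" for x :: nat
  have cop: "coprime (9::nat) 49" by code_simp
  have inj: "inj_on \<phi> {..<441}"
  proof
    fix x y assume x: "x \<in> {..<441}" and y: "y \<in> {..<441}" and e: "\<phi> x = \<phi> y"
    hence "[x = y] (mod 9)" "[x = y] (mod 49)" unfolding \<phi>_def cong_def by auto
    hence "[x = y] (mod 9 * 49)" using cop by (rule coprime_cong_mult_nat)
    thus "x = y" using x y unfolding cong_def by simp
  qed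
  have sub: "\<phi> ` {..<441} \<subseteq> {..<9} \<times> {..<49}" unfolding \<phi>_def by auto
  have im: "\<phi> ` {..<441} = {..<9} \<times> {..<49}"
    by (rule card_subset_eq) (use sub card_image[OF inj] in auto)
  have "(\<Sum>x<441. H (x mod 9) (x mod 49)) = (\<Sum>x<441. case_prod H (\<phi> x))" by (simp add: \<phi>_def)
  also have "\<dots> = (\<Sum>p\<in>\<phi> ` {..<441}. case_prod H p)" by (simp add: sum.reindex[OF inj])
  also have "\<dots> = (\<Sum>p\<in>{..<9} \<times> {..<49}. case_prod H p)" by (simp only: im)
  also have "\<dots> = (\<Sum>a<9. \<Sum>b<49. H a b)" by (simp add: sum.cartesian_product)
  finally show ?thesis .
qed


lemma crt2:
  fixes G K :: "nat \<Rightarrow> nat \<Rightarrow> nat"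
  shows "(\<Sum>x<441. \<Sum>y<441. G (x mod 9) (y mod 9) * K (x mod 49) (y mod 49))
       = (\<Sum>a<9. \<Sum>a'<9. G a a') * (\<Sum>b<49. \<Sum>b'<49. K b b')"
proof -
  have "(\<Sum>x<441. \<Sum>y<441. G (x mod 9) (y mod 9) * K (x mod 49) (y mod 49))
      = (\<Sum>x<441. \<Sum>a'<9. \<Sum>b'<49. G (x mod 9) a' * K (x mod 49) b')"
    by (rule sum.cong[OF refl]) (rule crt1)
  also have "\<dots> = (\<Sum>a<9. \<Sum>b<49. \<Sum>a'<9. \<Sum>b'<49. G a a' * K b b')"
    by (rule crt1[where H = "\<lambda>a b. \<Sum>a'<9. \<Sum>b'<49. G a a' * K b b'"])
  also have "\<dots> = (\<Sum>a<9. \<Sum>a'<9. G a a') * (\<Sum>b<49. \<Sum>b'<49. K b b')"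
    by (simp only: sum_product)
  finally show ?thesis .
qed


lemma swap5: "(\<Sum>x\<in>A. \<Sum>y\<in>B. \<Sum>d1\<in>C1. \<Sum>d2\<in>C2. \<Sum>d3\<in>C3. (F x y d1 d2 d3::nat)) = (\<Sum>d1\<in>C1. \<Sum>d2\<in>C2. \<Sum>d3\<in>C3. \<Sum>x\<in>A. \<Sum>y\<in>B. F x y d1 d2 d3)"
proof -
  have "(\<Sum>x\<in>A. \<Sum>y\<in>B. \<Sum>d1\<in>C1. \<Sum>d2\<in>C2. \<Sum>d3\<in>C3. F x y d1 d2 d3) = (\<Sum>x\<in>A. \<Sum>d1\<in>C1. \<Sum>d2\<in>C2. \<Sum>d3\<in>C3. \<Sum>y\<in>B. F x y d1 d2 d3)"
    by (intro sum.cong refl, subst sum.swap, intro sum.cong refl, subst sum.swap, intro sum.cong refl, subst sum.swap, rule refl)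
  also have "\<dots> = (\<Sum>d1\<in>C1. \<Sum>d2\<in>C2. \<Sum>d3\<in>C3. \<Sum>x\<in>A. \<Sum>y\<in>B. F x y d1 d2 d3)"
    by (subst sum.swap, intro sum.cong refl, subst sum.swap, intro sum.cong refl, subst sum.swap, rule refl)
  finally show ?thesis .
qed


lemma prod3: "(\<Sum>d\<in>D. f d) * (\<Sum>d\<in>D. g d) * (\<Sum>d\<in>D. h d) = (\<Sum>d1\<in>D. \<Sum>d2\<in>D. \<Sum>d3\<in>D. (f d1 * g d2 * h d3::nat))"
proof -
  have "(\<Sum>d\<in>D. f d) * (\<Sum>d\<in>D. g d) * (\<Sum>d\<in>D. h d) = (\<Sum>d\<in>D. f d) * ((\<Sum>d\<in>D. g d) * (\<Sum>d\<in>D. h d))"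
    by (rule mult.assoc)
  also have "(\<Sum>d\<in>D. g d) * (\<Sum>d\<in>D. h d) = (\<Sum>d2\<in>D. \<Sum>d3\<in>D. g d2 * h d3)"
    by (rule sum_product)
  also have "(\<Sum>d\<in>D. f d) * (\<Sum>d2\<in>D. \<Sum>d3\<in>D. g d2 * h d3) = (\<Sum>d1\<in>D. \<Sum>d2\<in>D. f d1 * (\<Sum>d3\<in>D. g d2 * h d3))"
    by (rule sum_product)
  also have "\<dots> = (\<Sum>d1\<in>D. \<Sum>d2\<in>D. \<Sum>d3\<in>D. f d1 * g d2 * h d3)"
    by (simp add: sum_distrib_left mult.assoc)
  finally show ?thesis .
qed


definition Acnt :: "nat \<Rightarrow> int \<Rightarrow> int \<Rightarrow> int \<Rightarrow> nat" where
  "Acnt m u1 u2 u3 = (\<Sum>a<m. \<Sum>b<m. if gcd (int a) (int m) = u1 \<and> gcd (int b) (int m) = u2 \<and> gcd (- int a - int b) (int m) = u3 then 1 else 0)"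


lemma E_split:
  "E d1 (int x) * E d2 (int y) * E d3 (- int x - int y)
   = (if gcd (int (x mod 9)) 9 = cp3 (int d1) \<and> gcd (int (y mod 9)) 9 = cp3 (int d2) \<and> gcd (- int (x mod 9) - int (y mod 9)) 9 = cp3 (int d3) then 1 else 0)
   * (if gcd (int (x mod 49)) 49 = cp7 (int d1) \<and> gcd (int (y mod 49)) 49 = cp7 (int d2) \<and> gcd (- int (x mod 49) - int (y mod 49)) 49 = cp7 (int d3) then 1 else 0)"
proof -
  have a: "cp3 (int (x mod 9)) = cp3 (int x)" "cp3 (int (y mod 9)) = cp3 (int y)"
    using cp3_mod[of "int x"] cp3_mod[of "int y"] by (simp_all add: zmod_int)
  have b: "cp7 (int (x mod 49)) = cp7 (int x)" "cp7 (int (y mod 49)) = cp7 (int y)"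
    using cp7_mod[of "int x"] cp7_mod[of "int y"] by (simp_all add: zmod_int)
  have c: "cp3 (- int (x mod 9) - int (y mod 9)) = cp3 (- int x - int y)"
  proof -
    have "[int (x mod 9) = int x] (mod 9)" "[int (y mod 9) = int y] (mod 9)" by (simp_all add: cong_def zmod_int)
    hence "[0 - int (x mod 9) - int (y mod 9) = 0 - int x - int y] (mod 9)" by (intro cong_diff cong_refl)
    hence "(- int (x mod 9) - int (y mod 9)) mod 9 = (- int x - int y) mod 9" by (simp add: cong_def)
    thus ?thesis by (metis cp3_mod)
  qed
  have d: "cp7 (- int (x mod 49) - int (y mod 49)) = cp7 (- int x - int y)"
  proof -
    have "[int (x mod 49) = int x] (mod 49)" "[int (y mod 49) = int y] (mod 49)" by (simp_all add: cong_def zmod_int)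
    hence "[0 - int (x mod 49) - int (y mod 49) = 0 - int x - int y] (mod 49)" by (intro cong_diff cong_refl)
    hence "(- int (x mod 49) - int (y mod 49)) mod 49 = (- int x - int y) mod 49" by (simp add: cong_def)
    thus ?thesis by (metis cp7_mod)
  qed
  show ?thesis unfolding E_def gcd9 gcd49 a b c d by auto
qed


lemma TT_formula:
  assumes D: "D \<subseteq> Dv"
  shows "TT D = (\<Sum>d1\<in>D. \<Sum>d2\<in>D. \<Sum>d3\<in>D.
     Acnt 9 (cp3 (int d1)) (cp3 (int d2)) (cp3 (int d3)) * Acnt 49 (cp7 (int d1)) (cp7 (int d2)) (cp7 (int d3)))"
proof -
  have "TT D = (\<Sum>x<441. \<Sum>y<441. \<Sum>d1\<in>D. \<Sum>d2\<in>D. \<Sum>d3\<in>D. E d1 (int x) * E d2 (int y) * E d3 (- int x - int y))"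
    unfolding TT_def fD_E[OF D] prod3 ..
  also have "\<dots> = (\<Sum>d1\<in>D. \<Sum>d2\<in>D. \<Sum>d3\<in>D. \<Sum>x<441. \<Sum>y<441. E d1 (int x) * E d2 (int y) * E d3 (- int x - int y))"
    by (rule swap5)
  also have "\<dots> = (\<Sum>d1\<in>D. \<Sum>d2\<in>D. \<Sum>d3\<in>D.
     Acnt 9 (cp3 (int d1)) (cp3 (int d2)) (cp3 (int d3)) * Acnt 49 (cp7 (int d1)) (cp7 (int d2)) (cp7 (int d3)))"
  proof (intro sum.cong refl)
    fix d1 d2 d3
    show "(\<Sum>x<441. \<Sum>y<441. E d1 (int x) * E d2 (int y) * E d3 (- int x - int y)) =
      Acnt 9 (cp3 (int d1)) (cp3 (int d2)) (cp3 (int d3)) * Acnt 49 (cp7 (int d1)) (cp7 (int d2)) (cp7 (int d3))"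
      unfolding E_split Acnt_def of_nat_numeral
      by (rule crt2[where G = "\<lambda>a b. if gcd (int a) 9 = cp3 (int d1) \<and> gcd (int b) 9 = cp3 (int d2) \<and> gcd (- int a - int b) 9 = cp3 (int d3) then 1 else 0"
         and K = "\<lambda>a b. if gcd (int a) 49 = cp7 (int d1) \<and> gcd (int b) 49 = cp7 (int d2) \<and> gcd (- int a - int b) 49 = cp7 (int d3) then 1 else 0"])
  qed
  finally show ?thesis .
qed




definition Ncnt :: "nat \<Rightarrow> int \<Rightarrow> int \<Rightarrow> int \<Rightarrow> nat" where
  "Ncnt m a u2 u3 = (\<Sum>b<m. if gcd (int b) (int m) = u2 \<and> gcd (- a - int b) (int m) = u3 then 1 else 0)"


lemma mult_sum:
  fixes g :: "int \<Rightarrow> 'a::comm_monoid_add"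
  assumes n: "n > 0" and cop: "coprime w (int n)" and per: "\<And>k. g (k mod int n) = g k"
  shows "(\<Sum>j<n. g (w * int j)) = (\<Sum>x<n. g (int x))"
proof -
  define h where "h j = nat ((w * int j) mod int n)" for j
  have hl: "h j < n" for j using n unfolding h_def
    by (simp add: nat_less_iff)
  have inj: "inj_on h {..<n}"
  proof
    fix j j' assume j: "j \<in> {..<n}" and j': "j' \<in> {..<n}" and e: "h j = h j'"
    hence "(w * int j) mod int n = (w * int j') mod int n" using n unfolding h_def
      by (simp add: nat_eq_iff)
    hence "[w * int j = w * int j'] (mod int n)" unfolding cong_def .
    hence "[int j = int j'] (mod int n)" using cop by (simp add: cong_mult_lcancel)
    hence "int j mod int n = int j' mod int n" unfolding cong_def .
    thus "j = j'" using j j' by simp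
  qed
  have im: "h ` {..<n} = {..<n}"
    by (rule endo_inj_surj) (use inj hl in auto)
  have "(\<Sum>j<n. g (w * int j)) = (\<Sum>j<n. g (int (h j)))"
    by (rule sum.cong[OF refl]) (use n per in \<open>simp add: h_def\<close>)
  also have "\<dots> = (\<Sum>x\<in>h ` {..<n}. g (int x))"
    by (simp add: sum.reindex[OF inj])
  also have "\<dots> = (\<Sum>x<n. g (int x))" by (simp only: im)
  finally show ?thesis .
qed


lemma Ncnt_unit:
  assumes m: "m > 0" and cop: "coprime w (int m)"
  shows "Ncnt m (w * a) u2 u3 = Ncnt m a u2 u3"
proof -
  define g where "g t = (if gcd t (int m) = u2 \<and> gcd (- (w * a) - t) (int m) = u3 then 1 else (0::nat))" for t
  have mz: "int m \<noteq> 0" using m by simp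
  have per: "g (k mod int m) = g k" for k
  proof -
    have "gcd (- (w * a) - k mod int m) (int m) = gcd ((- (w * a) - k mod int m) mod int m) (int m)"
      using mz by (simp add: gcd_mod_left)
    also have "(- (w * a) - k mod int m) mod int m = (- (w * a) - k) mod int m" by (simp add: mod_diff_right_eq)
    also have "gcd \<dots> (int m) = gcd (- (w * a) - k) (int m)" using mz by (simp add: gcd_mod_left)
    finally show ?thesis unfolding g_def using mz by (simp add: gcd_mod_left)
  qed
  have cop': "coprime (int m) w" using cop by (simp add: coprime_commute)
  have "Ncnt m (w * a) u2 u3 = (\<Sum>b<m. g (int b))" unfolding Ncnt_def g_def ..
  also have "\<dots> = (\<Sum>b<m. g (w * int b))" by (rule mult_sum[where g = g, symmetric, OF m cop per])
  also have "\<dots> = Ncnt m a u2 u3" unfolding Ncnt_def g_def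
  proof (rule sum.cong[OF refl])
    fix b
    have "- (w * a) - w * int b = w * (- a - int b)" by (simp add: algebra_simps)
    thus "(if gcd (w * int b) (int m) = u2 \<and> gcd (- (w * a) - w * int b) (int m) = u3 then 1 else 0) =
        (if gcd (int b) (int m) = u2 \<and> gcd (- a - int b) (int m) = u3 then 1 else (0::nat))"
      using gcd_mult_left_left_cancel[OF cop'] by simp
  qed
  finally show ?thesis .
qed


lemma Acnt_N: "Acnt m u1 u2 u3 = (\<Sum>a<m. if gcd (int a) (int m) = u1 then Ncnt m (int a) u2 u3 else 0)"
  unfolding Acnt_def Ncnt_def by (rule sum.cong[OF refl]) simp


lemma Acnt9_red:
  assumes u: "u1 \<in> {1,3,9}"
  shows "Acnt 9 u1 u2 u3 = (\<Sum>a<9. if gcd (int a) 9 = u1 then 1 else 0) * Ncnt 9 (if u1 = 9 then 0 else u1) u2 u3"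
proof -
  let ?r = "if u1 = 9 then 0 else u1"
  have "Acnt 9 u1 u2 u3 = (\<Sum>a<9::nat. if gcd (int a) 9 = u1 then Ncnt 9 (int a) u2 u3 else 0)"
    by (simp add: Acnt_N)
  also have "\<dots> = (\<Sum>a<9::nat. if gcd (int a) 9 = u1 then Ncnt 9 ?r u2 u3 else 0)"
  proof (rule sum.cong[OF refl])
    fix a assume a: "a \<in> {..<9::nat}"
    show "(if gcd (int a) 9 = u1 then Ncnt 9 (int a) u2 u3 else 0) = (if gcd (int a) 9 = u1 then Ncnt 9 ?r u2 u3 else 0)"
    proof (cases "gcd (int a) 9 = u1")
      case True
      from u consider "u1 = 1" | "u1 = 3" | "u1 = 9" by auto
      thus ?thesis
      proof cases
        case 1
        hence "coprime (int a) (int 9)" using True by (simp add: coprime_iff_gcd_eq_1)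
        from Ncnt_unit[OF _ this, of 1 u2 u3] show ?thesis using 1 True by simp
      next
        case 2
        hence c: "cp3 (int a) = 3" using True by (simp add: gcd9)
        have m2: "int a mod 9 \<noteq> 0"
        proof
          assume h: "int a mod 9 = 0"
          have "cp3 (int a) = 9" unfolding cp3_def by (simp only: h simp_thms if_True)
          with c show False by simp
        qed
        have m1: "int a mod 3 = 0"
        proof (rule ccontr)
          assume h: "int a mod 3 \<noteq> 0"
          have "cp3 (int a) = 1" unfolding cp3_def by (simp only: h m2 if_False)
          with c show False by simp
        qed
        have ia: "int a = (int a div 3) * 3" using div_mult_mod_eq[of "int a" 3] m1 by simp
        have nd: "(int a div 3) mod 3 \<noteq> 0"
        proof
          assume "(int a div 3) mod 3 = 0"
          hence "3 dvd (int a div 3)" by (simp add: mod_eq_0_iff_dvd)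
          hence "3 * 3 dvd (int a div 3) * 3" by (rule mult_dvd_mono) simp
          hence "9 dvd int a" using ia by simp
          thus False using m2 by (simp add: mod_eq_0_iff_dvd)
        qed
        have "(int a div 3) mod 3 = ((int a div 3) mod 9) mod 3" by (simp add: mod_mod_cancel)
        hence nd2: "(int a div 3) mod 9 \<noteq> 0" using nd by auto
        have "cp3 (int a div 3) = 1" unfolding cp3_def by (simp only: nd nd2 if_False)
        hence "coprime (int a div 3) (int 9)" by (simp add: coprime_iff_gcd_eq_1 gcd9)
        from Ncnt_unit[OF _ this, of 3 u2 u3] have "Ncnt 9 (int a) u2 u3 = Ncnt 9 3 u2 u3"
          using ia by simp
        thus ?thesis using 2 True by simp
      next
        case 3
        hence "cp3 (int a) = 9" using True by (simp add: gcd9)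
        hence c9: "cp3 (int a) = 9" .
        have h: "int a mod 9 = 0"
        proof (rule ccontr)
          assume h: "int a mod 9 \<noteq> 0"
          have "cp3 (int a) = (if int a mod 3 = 0 then 3 else 1)" unfolding cp3_def by (simp only: h if_False)
          with c9 show False by (cases "int a mod 3 = 0") simp_all
        qed
        have "int (a mod 9) = 0" using h by (simp only: zmod_int of_nat_numeral)
        hence "a mod 9 = 0" by simp
        hence "a = 0" using a by simp
        thus ?thesis using 3 True by simp
      qed
    qed simp
  qed
  also have "\<dots> = (\<Sum>a<9::nat. if gcd (int a) 9 = u1 then 1 else 0) * Ncnt 9 ?r u2 u3"
    by (subst sum_distrib_right) (rule sum.cong, auto)
  finally show ?thesis .
qed


lemma N9_list: "Ncnt 9 r u2 u3 = (\<Sum>b\<leftarrow>[0..<9]. if cp3 (int b) = u2 \<and> cp3 (- r - int b) = u3 then 1 else 0)"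
  unfolding Ncnt_def of_nat_numeral gcd9 by (simp add: sum_set_upt_conv_sum_list_nat[symmetric] atLeast0LessThan)


lemma C9_list: "(\<Sum>a<9::nat. if gcd (int a) 9 = u1 then 1 else (0::nat)) = (\<Sum>b\<leftarrow>[0..<9]. if cp3 (int b) = u1 then 1 else 0)"
  unfolding gcd9 by (simp add: sum_set_upt_conv_sum_list_nat[symmetric] atLeast0LessThan)

lemma C9_1: "(\<Sum>a<9::nat. if gcd (int a) 9 = 1 then 1 else (0::nat)) = 6"
  unfolding C9_list by code_simp

lemma C9_3: "(\<Sum>a<9::nat. if gcd (int a) 9 = 3 then 1 else (0::nat)) = 2"
  unfolding C9_list by code_simp

lemma C9_9: "(\<Sum>a<9::nat. if gcd (int a) 9 = 9 then 1 else (0::nat)) = 1"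
  unfolding C9_list by code_simp

lemma N9_1_1_1: "Ncnt 9 1 1 1 = 3"
  unfolding N9_list by code_simp

lemma N9_1_1_3: "Ncnt 9 1 1 3 = 2"
  unfolding N9_list by code_simp

lemma N9_1_1_9: "Ncnt 9 1 1 9 = 1"
  unfolding N9_list by code_simp

lemma N9_1_3_1: "Ncnt 9 1 3 1 = 2"
  unfolding N9_list by code_simp

lemma N9_1_3_3: "Ncnt 9 1 3 3 = 0"
  unfolding N9_list by code_simp

lemma N9_1_3_9: "Ncnt 9 1 3 9 = 0"
  unfolding N9_list by code_simp

lemma N9_1_9_1: "Ncnt 9 1 9 1 = 1"
  unfolding N9_list by code_simp

lemma N9_1_9_3: "Ncnt 9 1 9 3 = 0"
  unfolding N9_list by code_simp

lemma N9_1_9_9: "Ncnt 9 1 9 9 = 0"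
  unfolding N9_list by code_simp

lemma N9_3_1_1: "Ncnt 9 3 1 1 = 6"
  unfolding N9_list by code_simp

lemma N9_3_1_3: "Ncnt 9 3 1 3 = 0"
  unfolding N9_list by code_simp

lemma N9_3_1_9: "Ncnt 9 3 1 9 = 0"
  unfolding N9_list by code_simp

lemma N9_3_3_1: "Ncnt 9 3 3 1 = 0"
  unfolding N9_list by code_simp

lemma N9_3_3_3: "Ncnt 9 3 3 3 = 1"
  unfolding N9_list by code_simp

lemma N9_3_3_9: "Ncnt 9 3 3 9 = 1"
  unfolding N9_list by code_simp

lemma N9_3_9_1: "Ncnt 9 3 9 1 = 0"
  unfolding N9_list by code_simp

lemma N9_3_9_3: "Ncnt 9 3 9 3 = 1"
  unfolding N9_list by code_simp

lemma N9_3_9_9: "Ncnt 9 3 9 9 = 0"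
  unfolding N9_list by code_simp

lemma N9_0_1_1: "Ncnt 9 0 1 1 = 6"
  unfolding N9_list by code_simp

lemma N9_0_1_3: "Ncnt 9 0 1 3 = 0"
  unfolding N9_list by code_simp

lemma N9_0_1_9: "Ncnt 9 0 1 9 = 0"
  unfolding N9_list by code_simp

lemma N9_0_3_1: "Ncnt 9 0 3 1 = 0"
  unfolding N9_list by code_simp

lemma N9_0_3_3: "Ncnt 9 0 3 3 = 2"
  unfolding N9_list by code_simp

lemma N9_0_3_9: "Ncnt 9 0 3 9 = 0"
  unfolding N9_list by code_simp

lemma N9_0_9_1: "Ncnt 9 0 9 1 = 0"
  unfolding N9_list by code_simp

lemma N9_0_9_3: "Ncnt 9 0 9 3 = 0"
  unfolding N9_list by code_simp

lemma N9_0_9_9: "Ncnt 9 0 9 9 = 1"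
  unfolding N9_list by code_simp

lemma A9_1_1_1[simp]: "Acnt 9 1 1 1 = 18"
  by (subst Acnt9_red) (simp_all add: C9_1 N9_1_1_1)

lemma A9_1_1_3[simp]: "Acnt 9 1 1 3 = 12"
  by (subst Acnt9_red) (simp_all add: C9_1 N9_1_1_3)

lemma A9_1_1_9[simp]: "Acnt 9 1 1 9 = 6"
  by (subst Acnt9_red) (simp_all add: C9_1 N9_1_1_9)

lemma A9_1_3_1[simp]: "Acnt 9 1 3 1 = 12"
  by (subst Acnt9_red) (simp_all add: C9_1 N9_1_3_1)

lemma A9_1_3_3[simp]: "Acnt 9 1 3 3 = 0"
  by (subst Acnt9_red) (simp_all add: C9_1 N9_1_3_3)

lemma A9_1_3_9[simp]: "Acnt 9 1 3 9 = 0"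
  by (subst Acnt9_red) (simp_all add: C9_1 N9_1_3_9)

lemma A9_1_9_1[simp]: "Acnt 9 1 9 1 = 6"
  by (subst Acnt9_red) (simp_all add: C9_1 N9_1_9_1)

lemma A9_1_9_3[simp]: "Acnt 9 1 9 3 = 0"
  by (subst Acnt9_red) (simp_all add: C9_1 N9_1_9_3)

lemma A9_1_9_9[simp]: "Acnt 9 1 9 9 = 0"
  by (subst Acnt9_red) (simp_all add: C9_1 N9_1_9_9)

lemma A9_3_1_1[simp]: "Acnt 9 3 1 1 = 12"
  by (subst Acnt9_red) (simp_all add: C9_3 N9_3_1_1)

lemma A9_3_1_3[simp]: "Acnt 9 3 1 3 = 0"
  by (subst Acnt9_red) (simp_all add: C9_3 N9_3_1_3)

lemma A9_3_1_9[simp]: "Acnt 9 3 1 9 = 0"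
  by (subst Acnt9_red) (simp_all add: C9_3 N9_3_1_9)

lemma A9_3_3_1[simp]: "Acnt 9 3 3 1 = 0"
  by (subst Acnt9_red) (simp_all add: C9_3 N9_3_3_1)

lemma A9_3_3_3[simp]: "Acnt 9 3 3 3 = 2"
  by (subst Acnt9_red) (simp_all add: C9_3 N9_3_3_3)

lemma A9_3_3_9[simp]: "Acnt 9 3 3 9 = 2"
  by (subst Acnt9_red) (simp_all add: C9_3 N9_3_3_9)

lemma A9_3_9_1[simp]: "Acnt 9 3 9 1 = 0"
  by (subst Acnt9_red) (simp_all add: C9_3 N9_3_9_1)

lemma A9_3_9_3[simp]: "Acnt 9 3 9 3 = 2"
  by (subst Acnt9_red) (simp_all add: C9_3 N9_3_9_3)

lemma A9_3_9_9[simp]: "Acnt 9 3 9 9 = 0"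
  by (subst Acnt9_red) (simp_all add: C9_3 N9_3_9_9)

lemma A9_9_1_1[simp]: "Acnt 9 9 1 1 = 6"
  by (subst Acnt9_red) (simp_all add: C9_9 N9_0_1_1)

lemma A9_9_1_3[simp]: "Acnt 9 9 1 3 = 0"
  by (subst Acnt9_red) (simp_all add: C9_9 N9_0_1_3)

lemma A9_9_1_9[simp]: "Acnt 9 9 1 9 = 0"
  by (subst Acnt9_red) (simp_all add: C9_9 N9_0_1_9)

lemma A9_9_3_1[simp]: "Acnt 9 9 3 1 = 0"
  by (subst Acnt9_red) (simp_all add: C9_9 N9_0_3_1)

lemma A9_9_3_3[simp]: "Acnt 9 9 3 3 = 2"
  by (subst Acnt9_red) (simp_all add: C9_9 N9_0_3_3)

lemma A9_9_3_9[simp]: "Acnt 9 9 3 9 = 0"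
  by (subst Acnt9_red) (simp_all add: C9_9 N9_0_3_9)

lemma A9_9_9_1[simp]: "Acnt 9 9 9 1 = 0"
  by (subst Acnt9_red) (simp_all add: C9_9 N9_0_9_1)

lemma A9_9_9_3[simp]: "Acnt 9 9 9 3 = 0"
  by (subst Acnt9_red) (simp_all add: C9_9 N9_0_9_3)

lemma A9_9_9_9[simp]: "Acnt 9 9 9 9 = 1"
  by (subst Acnt9_red) (simp_all add: C9_9 N9_0_9_9)


lemma Acnt49_red:
  assumes u: "u1 \<in> {1,7,49}"
  shows "Acnt 49 u1 u2 u3 = (\<Sum>a<49. if gcd (int a) 49 = u1 then 1 else 0) * Ncnt 49 (if u1 = 49 then 0 else u1) u2 u3"
proof -
  let ?r = "if u1 = 49 then 0 else u1"
  have "Acnt 49 u1 u2 u3 = (\<Sum>a<49::nat. if gcd (int a) 49 = u1 then Ncnt 49 (int a) u2 u3 else 0)"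
    by (simp add: Acnt_N)
  also have "\<dots> = (\<Sum>a<49::nat. if gcd (int a) 49 = u1 then Ncnt 49 ?r u2 u3 else 0)"
  proof (rule sum.cong[OF refl])
    fix a assume a: "a \<in> {..<49::nat}"
    show "(if gcd (int a) 49 = u1 then Ncnt 49 (int a) u2 u3 else 0) = (if gcd (int a) 49 = u1 then Ncnt 49 ?r u2 u3 else 0)"
    proof (cases "gcd (int a) 49 = u1")
      case True
      from u consider "u1 = 1" | "u1 = 7" | "u1 = 49" by auto
      thus ?thesis
      proof cases
        case 1
        hence "coprime (int a) (int 49)" using True by (simp add: coprime_iff_gcd_eq_1)
        from Ncnt_unit[OF _ this, of 1 u2 u3] show ?thesis using 1 True by simp
      next
        case 2
        hence c: "cp7 (int a) = 7" using True by (simp add: gcd49)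
        have m2: "int a mod 49 \<noteq> 0"
        proof
          assume h: "int a mod 49 = 0"
          have "cp7 (int a) = 49" unfolding cp7_def by (simp only: h simp_thms if_True)
          with c show False by simp
        qed
        have m1: "int a mod 7 = 0"
        proof (rule ccontr)
          assume h: "int a mod 7 \<noteq> 0"
          have "cp7 (int a) = 1" unfolding cp7_def by (simp only: h m2 if_False)
          with c show False by simp
        qed
        have ia: "int a = (int a div 7) * 7" using div_mult_mod_eq[of "int a" 7] m1 by simp
        have nd: "(int a div 7) mod 7 \<noteq> 0"
        proof
          assume "(int a div 7) mod 7 = 0"
          hence "7 dvd (int a div 7)" by (simp add: mod_eq_0_iff_dvd)
          hence "7 * 7 dvd (int a div 7) * 7" by (rule mult_dvd_mono) simp
          hence "49 dvd int a" using ia by simp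
          thus False using m2 by (simp add: mod_eq_0_iff_dvd)
        qed
        have "(int a div 7) mod 7 = ((int a div 7) mod 49) mod 7" by (simp add: mod_mod_cancel)
        hence nd2: "(int a div 7) mod 49 \<noteq> 0" using nd by auto
        have "cp7 (int a div 7) = 1" unfolding cp7_def by (simp only: nd nd2 if_False)
        hence "coprime (int a div 7) (int 49)" by (simp add: coprime_iff_gcd_eq_1 gcd49)
        from Ncnt_unit[OF _ this, of 7 u2 u3] have "Ncnt 49 (int a) u2 u3 = Ncnt 49 7 u2 u3"
          using ia by simp
        thus ?thesis using 2 True by simp
      next
        case 3
        hence "cp7 (int a) = 49" using True by (simp add: gcd49)
        hence c9: "cp7 (int a) = 49" .
        have h: "int a mod 49 = 0"
        proof (rule ccontr)
          assume h: "int a mod 49 \<noteq> 0"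
          have "cp7 (int a) = (if int a mod 7 = 0 then 7 else 1)" unfolding cp7_def by (simp only: h if_False)
          with c9 show False by (cases "int a mod 7 = 0") simp_all
        qed
        have "int (a mod 49) = 0" using h by (simp only: zmod_int of_nat_numeral)
        hence "a mod 49 = 0" by simp
        hence "a = 0" using a by simp
        thus ?thesis using 3 True by simp
      qed
    qed simp
  qed
  also have "\<dots> = (\<Sum>a<49::nat. if gcd (int a) 49 = u1 then 1 else 0) * Ncnt 49 ?r u2 u3"
    by (subst sum_distrib_right) (rule sum.cong, auto)
  finally show ?thesis .
qed


lemma N49_list: "Ncnt 49 r u2 u3 = (\<Sum>b\<leftarrow>[0..<49]. if cp7 (int b) = u2 \<and> cp7 (- r - int b) = u3 then 1 else 0)"
  unfolding Ncnt_def of_nat_numeral gcd49 by (simp add: sum_set_upt_conv_sum_list_nat[symmetric] atLeast0LessThan)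


lemma C49_list: "(\<Sum>a<49::nat. if gcd (int a) 49 = u1 then 1 else (0::nat)) = (\<Sum>b\<leftarrow>[0..<49]. if cp7 (int b) = u1 then 1 else 0)"
  unfolding gcd49 by (simp add: sum_set_upt_conv_sum_list_nat[symmetric] atLeast0LessThan)

lemma C49_1: "(\<Sum>a<49::nat. if gcd (int a) 49 = 1 then 1 else (0::nat)) = 42"
  unfolding C49_list by code_simp

lemma C49_7: "(\<Sum>a<49::nat. if gcd (int a) 49 = 7 then 1 else (0::nat)) = 6"
  unfolding C49_list by code_simp

lemma C49_49: "(\<Sum>a<49::nat. if gcd (int a) 49 = 49 then 1 else (0::nat)) = 1"
  unfolding C49_list by code_simp

lemma N49_1_1_1: "Ncnt 49 1 1 1 = 35"
  unfolding N49_list by code_simp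

lemma N49_1_1_7: "Ncnt 49 1 1 7 = 6"
  unfolding N49_list by code_simp

lemma N49_1_1_49: "Ncnt 49 1 1 49 = 1"
  unfolding N49_list by code_simp

lemma N49_1_7_1: "Ncnt 49 1 7 1 = 6"
  unfolding N49_list by code_simp

lemma N49_1_7_7: "Ncnt 49 1 7 7 = 0"
  unfolding N49_list by code_simp

lemma N49_1_7_49: "Ncnt 49 1 7 49 = 0"
  unfolding N49_list by code_simp

lemma N49_1_49_1: "Ncnt 49 1 49 1 = 1"
  unfolding N49_list by code_simp

lemma N49_1_49_7: "Ncnt 49 1 49 7 = 0"
  unfolding N49_list by code_simp

lemma N49_1_49_49: "Ncnt 49 1 49 49 = 0"
  unfolding N49_list by code_simp

lemma N49_7_1_1: "Ncnt 49 7 1 1 = 42"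
  unfolding N49_list by code_simp

lemma N49_7_1_7: "Ncnt 49 7 1 7 = 0"
  unfolding N49_list by code_simp

lemma N49_7_1_49: "Ncnt 49 7 1 49 = 0"
  unfolding N49_list by code_simp

lemma N49_7_7_1: "Ncnt 49 7 7 1 = 0"
  unfolding N49_list by code_simp

lemma N49_7_7_7: "Ncnt 49 7 7 7 = 5"
  unfolding N49_list by code_simp

lemma N49_7_7_49: "Ncnt 49 7 7 49 = 1"
  unfolding N49_list by code_simp

lemma N49_7_49_1: "Ncnt 49 7 49 1 = 0"
  unfolding N49_list by code_simp

lemma N49_7_49_7: "Ncnt 49 7 49 7 = 1"
  unfolding N49_list by code_simp

lemma N49_7_49_49: "Ncnt 49 7 49 49 = 0"
  unfolding N49_list by code_simp

lemma N49_0_1_1: "Ncnt 49 0 1 1 = 42"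
  unfolding N49_list by code_simp

lemma N49_0_1_7: "Ncnt 49 0 1 7 = 0"
  unfolding N49_list by code_simp

lemma N49_0_1_49: "Ncnt 49 0 1 49 = 0"
  unfolding N49_list by code_simp

lemma N49_0_7_1: "Ncnt 49 0 7 1 = 0"
  unfolding N49_list by code_simp

lemma N49_0_7_7: "Ncnt 49 0 7 7 = 6"
  unfolding N49_list by code_simp

lemma N49_0_7_49: "Ncnt 49 0 7 49 = 0"
  unfolding N49_list by code_simp

lemma N49_0_49_1: "Ncnt 49 0 49 1 = 0"
  unfolding N49_list by code_simp

lemma N49_0_49_7: "Ncnt 49 0 49 7 = 0"
  unfolding N49_list by code_simp

lemma N49_0_49_49: "Ncnt 49 0 49 49 = 1"
  unfolding N49_list by code_simp

lemma A49_1_1_1[simp]: "Acnt 49 1 1 1 = 1470"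
  by (subst Acnt49_red) (simp_all add: C49_1 N49_1_1_1)

lemma A49_1_1_7[simp]: "Acnt 49 1 1 7 = 252"
  by (subst Acnt49_red) (simp_all add: C49_1 N49_1_1_7)

lemma A49_1_1_49[simp]: "Acnt 49 1 1 49 = 42"
  by (subst Acnt49_red) (simp_all add: C49_1 N49_1_1_49)

lemma A49_1_7_1[simp]: "Acnt 49 1 7 1 = 252"
  by (subst Acnt49_red) (simp_all add: C49_1 N49_1_7_1)

lemma A49_1_7_7[simp]: "Acnt 49 1 7 7 = 0"
  by (subst Acnt49_red) (simp_all add: C49_1 N49_1_7_7)

lemma A49_1_7_49[simp]: "Acnt 49 1 7 49 = 0"
  by (subst Acnt49_red) (simp_all add: C49_1 N49_1_7_49)

lemma A49_1_49_1[simp]: "Acnt 49 1 49 1 = 42"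
  by (subst Acnt49_red) (simp_all add: C49_1 N49_1_49_1)

lemma A49_1_49_7[simp]: "Acnt 49 1 49 7 = 0"
  by (subst Acnt49_red) (simp_all add: C49_1 N49_1_49_7)

lemma A49_1_49_49[simp]: "Acnt 49 1 49 49 = 0"
  by (subst Acnt49_red) (simp_all add: C49_1 N49_1_49_49)

lemma A49_7_1_1[simp]: "Acnt 49 7 1 1 = 252"
  by (subst Acnt49_red) (simp_all add: C49_7 N49_7_1_1)

lemma A49_7_1_7[simp]: "Acnt 49 7 1 7 = 0"
  by (subst Acnt49_red) (simp_all add: C49_7 N49_7_1_7)

lemma A49_7_1_49[simp]: "Acnt 49 7 1 49 = 0"
  by (subst Acnt49_red) (simp_all add: C49_7 N49_7_1_49)

lemma A49_7_7_1[simp]: "Acnt 49 7 7 1 = 0"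
  by (subst Acnt49_red) (simp_all add: C49_7 N49_7_7_1)

lemma A49_7_7_7[simp]: "Acnt 49 7 7 7 = 30"
  by (subst Acnt49_red) (simp_all add: C49_7 N49_7_7_7)

lemma A49_7_7_49[simp]: "Acnt 49 7 7 49 = 6"
  by (subst Acnt49_red) (simp_all add: C49_7 N49_7_7_49)

lemma A49_7_49_1[simp]: "Acnt 49 7 49 1 = 0"
  by (subst Acnt49_red) (simp_all add: C49_7 N49_7_49_1)

lemma A49_7_49_7[simp]: "Acnt 49 7 49 7 = 6"
  by (subst Acnt49_red) (simp_all add: C49_7 N49_7_49_7)

lemma A49_7_49_49[simp]: "Acnt 49 7 49 49 = 0"
  by (subst Acnt49_red) (simp_all add: C49_7 N49_7_49_49)

lemma A49_49_1_1[simp]: "Acnt 49 49 1 1 = 42"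
  by (subst Acnt49_red) (simp_all add: C49_49 N49_0_1_1)

lemma A49_49_1_7[simp]: "Acnt 49 49 1 7 = 0"
  by (subst Acnt49_red) (simp_all add: C49_49 N49_0_1_7)

lemma A49_49_1_49[simp]: "Acnt 49 49 1 49 = 0"
  by (subst Acnt49_red) (simp_all add: C49_49 N49_0_1_49)

lemma A49_49_7_1[simp]: "Acnt 49 49 7 1 = 0"
  by (subst Acnt49_red) (simp_all add: C49_49 N49_0_7_1)

lemma A49_49_7_7[simp]: "Acnt 49 49 7 7 = 6"
  by (subst Acnt49_red) (simp_all add: C49_49 N49_0_7_7)

lemma A49_49_7_49[simp]: "Acnt 49 49 7 49 = 0"
  by (subst Acnt49_red) (simp_all add: C49_49 N49_0_7_49)

lemma A49_49_49_1[simp]: "Acnt 49 49 49 1 = 0"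
  by (subst Acnt49_red) (simp_all add: C49_49 N49_0_49_1)

lemma A49_49_49_7[simp]: "Acnt 49 49 49 7 = 0"
  by (subst Acnt49_red) (simp_all add: C49_49 N49_0_49_7)

lemma A49_49_49_49[simp]: "Acnt 49 49 49 49 = 1"
  by (subst Acnt49_red) (simp_all add: C49_49 N49_0_49_49)


lemma TT_a_e: "TT ({1,3}) = 82320"
  by (subst TT_formula) (simp_all add: Dv_def cp_tab)
lemma TT_b_e: "TT ({1,7,9,49}) = 81732"
  by (subst TT_formula) (simp_all add: Dv_def cp_tab)
lemma TT_a_21: "TT ({1,3} \<union> ({21})) = 92964"
  by (subst TT_formula) (simp_all add: Dv_def cp_tab)
lemma TT_b_21: "TT ({1,7,9,49} \<union> ({21})) = 92376"
  by (subst TT_formula) (simp_all add: Dv_def cp_tab)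
lemma TT_a_63: "TT ({1,3} \<union> ({63})) = 88398"
  by (subst TT_formula) (simp_all add: Dv_def cp_tab)
lemma TT_b_63: "TT ({1,7,9,49} \<union> ({63})) = 87810"
  by (subst TT_formula) (simp_all add: Dv_def cp_tab)
lemma TT_a_147: "TT ({1,3} \<union> ({147})) = 84086"
  by (subst TT_formula) (simp_all add: Dv_def cp_tab)
lemma TT_b_147: "TT ({1,7,9,49} \<union> ({147})) = 83498"
  by (subst TT_formula) (simp_all add: Dv_def cp_tab)
lemma TT_a_21_63: "TT ({1,3} \<union> ({21} \<union> {63})) = 99222"
  by (subst TT_formula) (simp_all add: Dv_def cp_tab)
lemma TT_b_21_63: "TT ({1,7,9,49} \<union> ({21} \<union> {63})) = 98634"
  by (subst TT_formula) (simp_all add: Dv_def cp_tab)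
lemma TT_a_21_147: "TT ({1,3} \<union> ({21} \<union> {147})) = 94766"
  by (subst TT_formula) (simp_all add: Dv_def cp_tab)
lemma TT_b_21_147: "TT ({1,7,9,49} \<union> ({21} \<union> {147})) = 94178"
  by (subst TT_formula) (simp_all add: Dv_def cp_tab)
lemma TT_a_63_147: "TT ({1,3} \<union> ({63} \<union> {147})) = 90164"
  by (subst TT_formula) (simp_all add: Dv_def cp_tab)
lemma TT_b_63_147: "TT ({1,7,9,49} \<union> ({63} \<union> {147})) = 89576"
  by (subst TT_formula) (simp_all add: Dv_def cp_tab)
lemma TT_a_21_63_147: "TT ({1,3} \<union> ({21} \<union> {63} \<union> {147})) = 101096"
  by (subst TT_formula) (simp_all add: Dv_def cp_tab)
lemma TT_b_21_63_147: "TT ({1,7,9,49} \<union> ({21} \<union> {63} \<union> {147})) = 100508"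
  by (subst TT_formula) (simp_all add: Dv_def cp_tab)
lemma divisors441: "divisors_of 441 = {1,3,7,9,21,49,63,147,441}"
proof -
  have "divisors_of 441 = set (filter (\<lambda>d. d dvd 441) [1..<442])"
    unfolding divisors_of_def by (auto dest: dvd_imp_le)
  also have "filter (\<lambda>d. d dvd (441::nat)) [1..<442] = [1,3,7,9,21,49,63,147,441]" by code_simp
  finally show ?thesis by simp
qed

lemma TT_cases:
  assumes "C \<subseteq> {21,63,147}"
  shows "TT ({1,3} \<union> C) \<noteq> TT ({1,7,9,49} \<union> C)"
proof -
  have C: "C = (if 21 \<in> C then {21} else {}) \<union> (if 63 \<in> C then {63} else {}) \<union> (if 147 \<in> C then {147} else {})"
    using assms by auto
  show ?thesis
    by (subst (1 2) C, cases "21 \<in> C"; cases "63 \<in> C"; cases "147 \<in> C";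
        simp only: if_True if_False Un_empty_right Un_empty_left TT_a_e TT_b_e TT_a_21 TT_b_21 TT_a_63 TT_b_63 TT_a_147 TT_b_147 TT_a_21_63 TT_b_21_63 TT_a_21_147 TT_b_21_147 TT_a_63_147 TT_b_63_147 TT_a_21_63_147 TT_b_21_63_147; simp)
qed

theorem lemma3p26:
  fixes D1 D2 :: "nat set"
  assumes "D1 \<subseteq> divisors_of 441 - {441}"
      and "D2 \<subseteq> divisors_of 441 - {441}"
      and "D1 - D2 = {3}"
      and "D2 - D1 = {9, 7, 49}"
      and "1 \<in> D1 \<inter> D2"
  shows "Spec (ICG_adj 441 D1) \<noteq> Spec (ICG_adj 441 D2)"
proof
  assume eq: "Spec (ICG_adj 441 D1) = Spec (ICG_adj 441 D2)"
  define C where "C = D1 \<inter> {21,63,147}"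
  have s1: "D1 \<subseteq> {1,3,7,9,21,49,63,147}" and s2: "D2 \<subseteq> {1,3,7,9,21,49,63,147}"
    using assms(1,2) by (auto simp: divisors441)
  have m3: "3 \<in> D1" "3 \<notin> D2" using assms(3) by blast+
  have m7: "7 \<in> D2" "7 \<notin> D1" "9 \<in> D2" "9 \<notin> D1" "49 \<in> D2" "49 \<notin> D1" using assms(4) by blast+
  have m1: "1 \<in> D1" "1 \<in> D2" using assms(5) by auto
  have same: "x \<in> D1 \<longleftrightarrow> x \<in> D2" if "x \<in> {21,63,147}" for x
  proof -
    have a: "x \<notin> {3}" "x \<notin> {9,7,49}" using that by auto
    have "x \<notin> D1 - D2" by (subst assms(3)) (rule a(1))
    moreover have "x \<notin> D2 - D1" by (subst assms(4)) (rule a(2))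
    ultimately show ?thesis by blast
  qed
  have D1e: "D1 = {1,3} \<union> C"
  proof (intro equalityI subsetI)
    fix x assume x: "x \<in> D1"
    hence "x \<in> {1,3,7,9,21,49,63,147}" using s1 by blast
    thus "x \<in> {1,3} \<union> C" using x m7 unfolding C_def by auto
  next
    fix x assume "x \<in> {1,3} \<union> C"
    thus "x \<in> D1" using m1 m3 unfolding C_def by auto
  qed
  have D2e: "D2 = {1,7,9,49} \<union> C"
  proof (intro equalityI subsetI)
    fix x assume x: "x \<in> D2"
    hence "x \<in> {1,3,7,9,21,49,63,147}" using s2 by blast
    thus "x \<in> {1,7,9,49} \<union> C" using x m3 same unfolding C_def by auto
  next
    fix x assume "x \<in> {1,7,9,49} \<union> C"
    thus "x \<in> D2" using m1 m7 same unfolding C_def by auto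
  qed
  have Dv1: "D1 \<subseteq> Dv" and Dv2: "D2 \<subseteq> Dv" using s1 s2 unfolding Dv_def by auto
  have c1: "ICG_adj 441 D1 \<in> carrier_mat 441 441" and c2: "ICG_adj 441 D2 \<in> carrier_mat 441 441"
    unfolding ICG_adj_def cay_adj_def by simp_all
  have "(of_nat (441 * TT D1) :: complex) = of_nat (441 * TT D2)"
    using tr3_ICG[OF assms(1)] tr3_ICG[OF assms(2)] tr3_spec[OF c1] tr3_spec[OF c2] eq by metis
  hence "TT D1 = TT D2" by (simp only: of_nat_eq_iff mult_cancel_left) simp
  moreover have "TT D1 \<noteq> TT D2"
    unfolding D1e D2e by (rule TT_cases) (auto simp: C_def)
  ultimately show False by simp
qed

end
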